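(* Let $c,C>0$ be arbitrary and define, for functions $g$ on $(0,\infty)$, the linear operator \[ L(g)(r):=c\int_{r}^\infty\frac{g(s)}{s}\, ds-C\Big(g(r)+\frac{1}{r}\int_0^r g(s)\, ds+r\int_r^\infty \frac{g(s)}{s^2}\, ds\Big). \] Then there exists a function $W_2$ that is positive and integrable on $[0,\infty)$ such that $W_1:=L^*(W_2)>0$ on $(0,\infty)$, where $L^*$ denotes the adjoint of $L$ with respect to the $L^2([0,\infty),dr)$ pairing.
   Context: Explicitly, the adjoint is $L^*(h)(r)=\frac{c}{r}\int_0^r h(s)\,ds-C\Big(h(r)+\int_r^\infty\frac{h(s)}{s}\,ds+\frac{1}{r^2}\int_0^r s\,h(s)\,ds\Big)$, characterized by $\int_0^\infty L(g)\,h\,dr=\int_0^\infty g\,L^*(h)\,dr$. *)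

theory Defs
  imports "HOL-Analysis.Analysis"
begin

definition L_op :: "real \<Rightarrow> real \<Rightarrow> (real \<Rightarrow> real) \<Rightarrow> real \<Rightarrow> real" where
  "L_op c C g r =
     c * (\<integral>s\<in>{r<..}. g s / s \<partial>lborel)
     - C * (g r + (1 / r) * (\<integral>s\<in>{0..r}. g s \<partial>lborel)
                + r * (\<integral>s\<in>{r<..}. g s / s\<^sup>2 \<partial>lborel))"

text \<open>Its L2 adjoint, explicitly as in the paper.\<close>
definition L_adj :: "real \<Rightarrow> real \<Rightarrow> (real \<Rightarrow> real) \<Rightarrow> real \<Rightarrow> real" where
  "L_adj c C h r =
     (c / r) * (\<integral>s\<in>{0..r}. h s \<partial>lborel)
     - C * (h r + (\<integral>s\<in>{r<..}. h s / s \<partial>lborel)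
                + (1 / r\<^sup>2) * (\<integral>s\<in>{0..r}. s * h s \<partial>lborel))"

end

theory Submission
  imports Defs
begin


lemma hk_to_lborel:
  fixes f :: "real \<Rightarrow> real"
  assumes hi: "(f has_integral I) S" and nn: "\<And>x. x \<in> S \<Longrightarrow> 0 \<le> f x"
    and fm: "f \<in> borel_measurable borel" and Sm: "S \<in> sets borel"
  shows "set_integrable lborel S f" "(LINT x:S|lborel. f x) = I"
proof -
  have "f absolutely_integrable_on S"
    using nonnegative_absolutely_integrable_1[of f S] hi nn by (auto simp: integrable_on_def)
  then have "integrable lebesgue (\<lambda>x. indicator S x *\<^sub>R f x)"
    by (simp add: set_integrable_def)
  moreover have "(\<lambda>x. indicator S x *\<^sub>R f x) \<in> borel_measurable lborel"
    using fm Sm by measurable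
  ultimately show si: "set_integrable lborel S f"
    unfolding set_integrable_def using integrable_completion by blast
  show "(LINT x:S|lborel. f x) = I"
    using set_borel_integral_eq_integral(2)[OF si] hi by (simp add: integral_unique)
qed

lemma hk_upper:
  fixes f g :: "real \<Rightarrow> real"
  assumes hi: "(g has_integral I) S" and b: "\<And>x. x \<in> S \<Longrightarrow> 0 \<le> f x \<and> f x \<le> g x"
    and fm: "f \<in> borel_measurable borel" and gm: "g \<in> borel_measurable borel"
    and Sm: "S \<in> sets borel"
  shows "set_integrable lborel S f" "(LINT x:S|lborel. f x) \<le> I"
proof -
  have gi: "set_integrable lborel S g" and gv: "(LINT x:S|lborel. g x) = I"
    using hk_to_lborel[OF hi _ gm Sm] b by force+
  show fi: "set_integrable lborel S f"
    apply (rule set_integrable_bound[OF gi])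
    using fm Sm apply (simp add: set_borel_measurable_def)
    using b apply (auto intro!: AE_I2)
    by (meson abs_ge_self order_trans b)
  show "(LINT x:S|lborel. f x) \<le> I"
    using set_integral_mono[OF fi gi] b gv by force
qed

lemma hk_lower:
  fixes f g :: "real \<Rightarrow> real"
  assumes hi: "(g has_integral I) S" and b: "\<And>x. x \<in> S \<Longrightarrow> 0 \<le> g x \<and> g x \<le> f x"
    and fi: "set_integrable lborel S f" and gm: "g \<in> borel_measurable borel"
    and Sm: "S \<in> sets borel"
  shows "I \<le> (LINT x:S|lborel. f x)"
proof -
  have gi: "set_integrable lborel S g" and gv: "(LINT x:S|lborel. g x) = I"
    using hk_to_lborel[OF hi _ gm Sm] b by force+
  show ?thesis
    using set_integral_mono[OF gi fi] b gv by force
qed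



definition hh :: "real \<Rightarrow> real \<Rightarrow> real" where
  "hh a s = (if s \<le> 0 then 1 else if s \<le> 1 then s powr (-a) else s powr (-3))"

lemma hh_meas: "hh a \<in> borel_measurable borel"
  unfolding hh_def
  by (intro measurable_If powr_real_measurable measurable_const measurable_ident_sets) auto

lemma hh_meas2: "(\<lambda>s. hh a s / s) \<in> borel_measurable borel"
  "(\<lambda>s. s * hh a s) \<in> borel_measurable borel"
  using hh_meas by (auto intro!: borel_measurable_divide borel_measurable_times)

lemma hh_pos: "hh a s > 0" unfolding hh_def by auto

lemma hh_int01: assumes "a < 1" "0 \<le> r" "r \<le> 1"
  shows "(hh a has_integral (r powr (1-a) / (1-a))) {0..r}"
proof -
  have P: "((\<lambda>x. x powr (-a)) has_integral (r powr (-a+1) / (-a+1))) {0..r}"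
    using has_integral_powr_from_0[of "-a" r] assms by auto
  have "(hh a has_integral (r powr (-a+1) / (-a+1))) {0..r}"
    by (rule has_integral_spike[of "{0}", OF _ _ P]) (use assms in \<open>auto simp: hh_def\<close>)
  moreover have "-a+1 = 1-a" by simp
  ultimately show ?thesis by simp
qed

lemma hh_int1inf: "(hh a has_integral (1/2)) {1..}"
proof -
  have P: "((\<lambda>x::real. x powr (-3)) has_integral (-(1 powr (-3+1::real)) / (-3+1))) {1..}"
    using has_integral_powr_to_inf[of "-3" 1] by auto
  have "(hh a has_integral (-(1 powr (-3+1::real)) / (-3+1))) {1..}"
    by (rule has_integral_spike[of "{}", OF _ _ P]) (auto simp: hh_def)
  then show ?thesis by simp
qed

lemma hh_intall: assumes "a < 1"
  shows "(hh a has_integral (1/(1-a) + 1/2)) {0..}"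
proof -
  have "(hh a has_integral (1/(1-a) + 1/2)) ({0..1} \<union> {1..})"
    apply (rule has_integral_Un)
    using hh_int01[of a 1] assms apply simp
    using hh_int1inf apply simp
    by (rule negligible_subset[of "{1}"]) auto
  moreover have "{0..1} \<union> {1..} = {0::real..}" by auto
  ultimately show ?thesis by simp
qed

lemma hh_integrable: assumes "a < 1" shows "set_integrable lborel {0..} (hh a)"
  using hk_to_lborel(1)[OF hh_intall[OF assms]] hh_pos hh_meas
  by (meson less_imp_le sets_lborel atLeast_borel)



lemma pw1: "s > 0 \<Longrightarrow> s powr (e - 1) = s powr e / (s::real)"
  by (simp add: powr_diff)

lemma pw2: "s > 0 \<Longrightarrow> s * s powr e = (s::real) powr (e + 1)"
  by (simp add: powr_add)

lemma hh_le: assumes "a \<le> 3" "s > 0" shows "hh a s \<le> s powr (-a)"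
proof (cases "s \<le> 1")
  case False
  then show ?thesis using assms by (auto simp: hh_def intro!: powr_mono)
qed (use assms in \<open>auto simp: hh_def\<close>)

lemma F1: assumes "a < 1" "0 \<le> r" "r \<le> 1"
  shows "(LINT s:{0..r}|lborel. hh a s) = r powr (1-a) / (1-a)"
  using hk_to_lborel(2)[OF hh_int01[OF assms]] hh_pos hh_meas
  by (meson less_imp_le sets_lborel atLeastAtMost_borel)

lemma F2: assumes "0 < a" "a < 1" "0 < r"
  shows "(LINT s:{r<..}|lborel. hh a s / s) \<le> r powr (-a) / a"
proof -
  have P: "((\<lambda>x::real. x powr (-a-1)) has_integral (-(r powr (-a-1+1)) / (-a-1+1))) {r..}"
    using has_integral_powr_to_inf[of "-a-1" r] assms by auto
  have Q: "((\<lambda>x::real. x powr (-a-1)) has_integral (-(r powr (-a-1+1)) / (-a-1+1))) {r<..}"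
    apply (rule has_integral_spike_set_eq[THEN iffD1, OF _ _ P])
    apply (rule negligible_subset[of "{r}"]; force)
    apply (rule negligible_subset[of "{}"]; force)
    done
  have "(LINT s:{r<..}|lborel. hh a s / s) \<le> (-(r powr (-a-1+1)) / (-a-1+1))"
  proof (rule hk_upper(2)[OF Q])
    fix x assume x: "x \<in> {r<..}"
    then have "x > 0" using assms by auto
    then show "0 \<le> hh a x / x \<and> hh a x / x \<le> x powr (- a - 1)"
      using hh_pos[of a x] hh_le[of a x] assms pw1[of x "-a"]
      by (auto simp: less_imp_le divide_right_mono)
  qed (auto simp: hh_meas2)
  then show ?thesis by simp
qed

lemma F3: assumes "a < 1" "0 < r"
  shows "(LINT s:{0..r}|lborel. s * hh a s) \<le> r powr (2-a) / (2-a)"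
proof -
  have P: "((\<lambda>x::real. x powr (1-a)) has_integral (r powr ((1-a)+1) / ((1-a)+1))) {0..r}"
    using has_integral_powr_from_0[of "1-a" r] assms by auto
  have "(LINT s:{0..r}|lborel. s * hh a s) \<le> r powr ((1-a)+1) / ((1-a)+1)"
  proof (rule hk_upper(2)[OF P])
    fix x assume x: "x \<in> {0..r}"
    show "0 \<le> x * hh a x \<and> x * hh a x \<le> x powr (1-a)"
    proof (cases "x = 0")
      case False
      then have "x > 0" using x by auto
      have "x * hh a x \<le> x * x powr (-a)"
        using hh_le[of a x] assms \<open>x > 0\<close> by (intro mult_left_mono) auto
      then show ?thesis
        using hh_pos[of a x] assms pw2[of x "-a"] \<open>x > 0\<close> by auto
    qed simp
  qed (auto simp: hh_meas2)
  moreover have "(1-a)+1 = 2-a" by simp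
  ultimately show ?thesis by simp
qed

lemma G1: assumes "a < 1" "1 < r"
  shows "1/(1-a) \<le> (LINT s:{0..r}|lborel. hh a s)"
proof -
  have P: "((\<lambda>x. if x \<in> {0..1} then hh a x else 0) has_integral (1 powr (1-a) / (1-a))) {0..r}"
    using hh_int01[of a 1] assms by (subst has_integral_restrict) auto
  have fi: "set_integrable lborel {0..r} (hh a)"
    by (rule set_integrable_subset[OF hh_integrable[OF assms(1)]]) auto
  have "1 powr (1-a) / (1-a) \<le> (LINT s:{0..r}|lborel. hh a s)"
  proof (rule hk_lower[OF P _ fi])
    show "(\<lambda>x. if x \<in> {0..1} then hh a x else 0) \<in> borel_measurable borel"
      by (intro measurable_If hh_meas measurable_const) auto
  qed (auto simp: less_imp_le[OF hh_pos])
  then show ?thesis by simp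
qed

lemma G2: assumes "1 \<le> r"
  shows "(LINT s:{r<..}|lborel. hh a s / s) \<le> r powr (-3) / 3"
proof -
  have P: "((\<lambda>x::real. x powr (-4)) has_integral (-(r powr (-4+1)) / (-4+1))) {r..}"
    using has_integral_powr_to_inf[of "-4" r] assms by auto
  have Q: "((\<lambda>x::real. x powr (-4)) has_integral (-(r powr (-4+1)) / (-4+1))) {r<..}"
    apply (rule has_integral_spike_set_eq[THEN iffD1, OF _ _ P])
    apply (rule negligible_subset[of "{r}"]; force)
    apply (rule negligible_subset[of "{}"]; force)
    done
  have "(LINT s:{r<..}|lborel. hh a s / s) \<le> (-(r powr (-4+1)) / (-4+1))"
  proof (rule hk_upper(2)[OF Q])
    fix x assume x: "x \<in> {r<..}"
    then have "x > 1" using assms by auto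
    then show "0 \<le> hh a x / x \<and> hh a x / x \<le> x powr (-4)"
      using hh_pos[of a x] pw1[of x "-3"]
      by (auto simp: hh_def)
  qed (auto simp: hh_meas2)
  then show ?thesis by simp
qed

lemma G3: assumes "0 \<le> a" "a < 1" "0 < r"
  shows "(LINT s:{0..r}|lborel. s * hh a s) \<le> r"
proof -
  have P: "((\<lambda>x::real. 1) has_integral r) {0..r}"
    using has_integral_const_real[of "1::real" 0 r] assms by simp
  have "(LINT s:{0..r}|lborel. s * hh a s) \<le> r"
  proof (rule hk_upper(2)[OF P])
    fix x assume x: "x \<in> {0..r}"
    show "0 \<le> x * hh a x \<and> x * hh a x \<le> 1"
    proof (cases "x = 0")
      case False
      then have x0: "x > 0" using x by auto
      show ?thesis
      proof (cases "x \<le> 1")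
        case True
        then show ?thesis using x0 pw2[of x "-a"] assms
          by (auto simp: hh_def intro!: powr_le1)
      next
        case False
        have "x powr (-2) \<le> x powr 0" using False by (intro powr_mono) auto
        then show ?thesis using x0 pw2[of x "-3"] False
          by (auto simp: hh_def)
      qed
    qed simp
  qed (auto simp: hh_meas2)
  then show ?thesis using assms by simp
qed



theorem lemma3p5:
  fixes c C :: real
  assumes "c > 0" and "C > 0"
  shows "\<exists>W2 :: real \<Rightarrow> real.
           (\<forall>s\<ge>0. W2 s > 0) \<and>
           set_integrable lborel {0..} W2 \<and>
           (\<forall>r>0. L_adj c C W2 r > 0)"
proof -
  define a where "a = max (1/2) (1 - c/(8*C))"
  have a1: "1/2 \<le> a" and a2: "a < 1" using assms by (auto simp: a_def)
  have "1 - a \<le> c/(8*C)" by (auto simp: a_def)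
  then have a3: "8*C \<le> c/(1-a)" using a2 assms by (simp add: field_simps)
  have main: "L_adj c C (hh a) r > 0" if r: "r > 0" for r
  proof (cases "r \<le> 1")
    case True
    define t where "t = r powr (-a)"
    have t0: "t > 0" using r by (simp add: t_def)
    have A: "(LINT s:{0..r}|lborel. hh a s) = r * t / (1-a)"
      using F1[OF a2 _ True] r pw2[of r "-a"] by (simp add: t_def)
    have B: "(LINT s:{r<..}|lborel. hh a s / s) \<le> t / a"
      using F2[OF _ a2 r] a1 by (simp add: t_def)
    have D: "(LINT s:{0..r}|lborel. s * hh a s) \<le> r^2 * t / (2-a)"
    proof -
      have "r powr (2-a) = r * (r * t)" using pw2[of r "-a"] pw2[of r "1-a"] r
        by (simp add: t_def)
      then show ?thesis using F3[OF a2 r] by (simp add: power2_eq_square)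
    qed
    have h: "hh a r = t" using r True by (simp add: hh_def t_def)
    have e1: "(c/r) * (r * t / (1-a)) = (c/(1-a)) * t" using r by (simp add: field_simps)
    have e2: "(c/(1-a)) * t \<ge> 8*C*t" using a3 t0 by (intro mult_right_mono) auto
    have tb: "t / a \<le> 2 * t" using a1 t0 by (simp add: field_simps)
    have db: "(1/r^2) * (LINT s:{0..r}|lborel. s * hh a s) \<le> t"
    proof -
      have "(1/r^2) * (LINT s:{0..r}|lborel. s * hh a s) \<le> (1/r^2) * (r^2 * t / (2-a))"
        using D r by (intro mult_left_mono) auto
      also have "\<dots> = t / (2-a)" using r by (simp add: field_simps)
      also have "\<dots> \<le> t" using a2 a1 t0 by (simp add: field_simps)
      finally show ?thesis .
    qed
    have "C * (hh a r + (LINT s:{r<..}|lborel. hh a s / s) + (1/r^2) * (LINT s:{0..r}|lborel. s * hh a s))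
          \<le> C * (4 * t)" (is "?X \<le> _")
      using h B tb db assms by (intro mult_left_mono) auto
    moreover have "C*(4*t) < 8*C*t" using assms t0 by simp
    ultimately show ?thesis unfolding L_adj_def A using e1 e2 by linarith
  next
    case False
    define u where "u = r powr (-3)"
    have u0: "u > 0" using r by (simp add: u_def)
    have ur: "u \<le> 1/r"
    proof -
      have "r powr (-3) \<le> r powr (-1)" using False by (intro powr_mono) auto
      then show ?thesis using r by (simp add: u_def powr_minus divide_inverse)
    qed
    have A: "1/(1-a) \<le> (LINT s:{0..r}|lborel. hh a s)" using G1[OF a2] False by simp
    have B: "(LINT s:{r<..}|lborel. hh a s / s) \<le> u / 3" using G2[of r a] False by (simp add: u_def)
    have D: "(LINT s:{0..r}|lborel. s * hh a s) \<le> r" using G3[OF _ a2 r] a1 by simp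
    have h: "hh a r = u" using False by (simp add: hh_def u_def)
    have db: "(1/r^2) * (LINT s:{0..r}|lborel. s * hh a s) \<le> 1/r"
    proof -
      have "(1/r^2) * (LINT s:{0..r}|lborel. s * hh a s) \<le> (1/r^2) * r"
        using D r by (intro mult_left_mono) auto
      then show ?thesis using r by (simp add: power2_eq_square)
    qed
    have "C * (hh a r + (LINT s:{r<..}|lborel. hh a s / s) + (1/r^2) * (LINT s:{0..r}|lborel. s * hh a s))
          \<le> C * (7/3 * (1/r))"
      using h B db ur assms by (intro mult_left_mono) auto
    moreover have "(c/r) * (LINT s:{0..r}|lborel. hh a s) \<ge> (c/r) * (1/(1-a))"
      using A assms r by (intro mult_left_mono) auto
    moreover have "(c/r) * (1/(1-a)) = (c/(1-a)) * (1/r)" by simp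
    moreover have "(c/(1-a)) * (1/r) \<ge> 8*C * (1/r)" using a3 r by (intro mult_right_mono) auto
    moreover have "C * (7/3 * (1/r)) < 8*C*(1/r)" using assms r by (simp add: field_simps)
    ultimately show ?thesis unfolding L_adj_def by linarith
  qed
  show ?thesis
    apply (rule exI[of _ "hh a"])
    using hh_pos hh_integrable[OF a2] main by auto
qed

end
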